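(* In the colored-tree setting below, let $v,v'\in V$ be horizontally close to each other. Then for every color $c\in C$ one of $f_c(v),f_c(v')$ is equal to or an ancestor of the other (i.e. the lowest-level vertex of the segment $f_c(v)f_c(v')\subset T_c$ is one of its endpoints), and there is a color $c\in C$ such that $$|vv'|\le|C|\,\mathcal L(f_c(v),f_c(v'))+|C|+1.$$
   Context: Let $(Z,d)$ be a bounded metric space with at least two points. Hyperbolic approximation with parameter $r\in(0,1/6]$: $k_0$ is the largest integer with $\operatorname{diam}Z<r^{k_0}$; for each integer $k\ge k_0$, $V_k\subset Z$ is a maximal $r^k$-separated subset; vertex set $V=\bigsqcup_{k\ge k_0}V_k$ with level $\ell(v)=k$ for $v\in V_k$, open ball $B(v)=\{z:d(z,v)<2r^k\}$, closure $\overline B(v)$; edges join equal-level vertices with $\overline B(v)\cap\overline B(v')\ne\emptyset$ and vertices on adjacent levels whose higher-level ball is contained in the lower-level ball; $|vv'|$ is the path metric with unit edges; the unique vertex of $V_{k_0}$ is the root. Distinct $v\in V_j$, $v'\in V_{j'}$, $j\ge j'\ge0$, are horizontally close if $d(v,v')<r^{j'}$. Colored-tree setting: assume $\operatorname{cdim}Z=n<\infty$, $r<\min\{\operatorname{diam}Z,1/\operatorname{diam}Z\}$, and $(\mathcal U_j)_{j\ge0}$ is a sequence of open coverings of $Z$, $\mathcal U_j=\bigcup_{c\in C}\mathcal U_j^c$ with $|C|=n+1$ and each $\mathcal U_j^c$ consisting of pairwise disjoint open sets, such that: (1) $\mathcal U_0^c=\{Z\}$ for all $c$ and $\sup_{U\in\mathcal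 U_j}\operatorname{diam}U<r^j$ for $j\ge1$; (2) for every $v\in V_{j+1}$, $j\ge0$, some $U\in\mathcal U_j$ contains $B(v)$; (3) for every $c$ and different $U\in\mathcal U_j^c$, $U'\in\mathcal U_{j'}^c$ with $j'\le j$, the set $B(U)=\bigcup\{B(v):v\in V_{j+1},B(v)\cap U\ne\emptyset\}$ satisfies $B(U)\subset U'$ or $B(U)\cap U'=\emptyset$. For $c\in C$, $T_c$ is the tree with vertex set $\bigsqcup_{j\ge0}\mathcal U_j^c$ (elements of $\mathcal U_j^c$ have level $j$; $Z\in\mathcal U_0^c$ is the root $v_c$); $U'$ of level $j'$ is an ancestor of $U$ of level $j$ if $j'<j$ and $U\subset U'$; $U,U'$ are joined by an edge iff one is an ancestor of the other with level maximal among ancestors of the other. $\mathcal L$ is the path metric on $T_c$ with unit edges. The map $f_c:V\to T_c$ sends the root of $X$ to $v_c$ and $v\in V_j$, $j>k_0$, to the element $U\in\mathcal U_{j'}^c$ with $B(v)\subset U$ and $j'\le\max\{j-1,0\}$ maximal. *)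

theory Defs
  imports "HOL-Analysis.Analysis"
begin

definition sdiam :: "('a \<Rightarrow> 'a \<Rightarrow> real) \<Rightarrow> 'a set \<Rightarrow> real" where
  "sdiam d S = Sup {d x y | x y. x \<in> S \<and> y \<in> S}"

definition gwalk :: "('v \<Rightarrow> 'v \<Rightarrow> bool) \<Rightarrow> 'v set \<Rightarrow> nat \<Rightarrow> 'v \<Rightarrow> 'v \<Rightarrow> bool" where
  "gwalk E Vs n x y \<longleftrightarrow> (\<exists>xs. length xs = Suc n \<and> hd xs = x \<and> last xs = y \<and> set xs \<subseteq> Vs
       \<and> (\<forall>i<n. E (xs ! i) (xs ! Suc i)))"

definition gdist :: "('v \<Rightarrow> 'v \<Rightarrow> bool) \<Rightarrow> 'v set \<Rightarrow> 'v \<Rightarrow> 'v \<Rightarrow> nat" where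
  "gdist E Vs x y = (LEAST n. gwalk E Vs n x y)"

text \<open>An open covering of (Z,d) with mesh at most tau, Lebesgue number at least delta*tau
  and multiplicity at most n+1 (Buyalo--Schroeder).\<close>
definition cdim_le :: "'a set \<Rightarrow> ('a \<Rightarrow> 'a \<Rightarrow> real) \<Rightarrow> nat \<Rightarrow> bool" where
  "cdim_le Z d n \<longleftrightarrow> (\<exists>\<delta>. 0 < \<delta> \<and> \<delta> < 1 \<and> (\<exists>\<tau>0>0. \<forall>\<tau>. 0 < \<tau> \<and> \<tau> < \<tau>0 \<longrightarrow>
     (\<exists>\<U>. (\<forall>U\<in>\<U>. openin (Metric_space.mtopology Z d) U) \<and> \<Union>\<U> = Z
        \<comment> \<open>mesh\<close>
        \<and> (\<forall>U\<in>\<U>. \<forall>x\<in>U. \<forall>y\<in>U. d x y \<le> \<tau>)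
        \<comment> \<open>Lebesgue number L(U) = inf_x sup_U dist(x, Z - U) \<ge> delta tau\<close>
        \<and> (\<forall>x\<in>Z. \<forall>s < \<delta> * \<tau>. \<exists>U\<in>\<U>. \<forall>y\<in>Z - U. s < d x y)
        \<comment> \<open>multiplicity\<close>
        \<and> (\<forall>x\<in>Z. finite {U\<in>\<U>. x \<in> U} \<and> card {U\<in>\<U>. x \<in> U} \<le> n + 1))))"

definition cdim_eq :: "'a set \<Rightarrow> ('a \<Rightarrow> 'a \<Rightarrow> real) \<Rightarrow> nat \<Rightarrow> bool" where
  "cdim_eq Z d n \<longleftrightarrow> cdim_le Z d n \<and> (\<forall>m<n. \<not> cdim_le Z d m)"

definition separated :: "('a \<Rightarrow> 'a \<Rightarrow> real) \<Rightarrow> real \<Rightarrow> 'a set \<Rightarrow> bool" where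
  "separated d a S \<longleftrightarrow> (\<forall>x\<in>S. \<forall>y\<in>S. x \<noteq> y \<longrightarrow> a \<le> d x y)"

definition max_separated :: "'a set \<Rightarrow> ('a \<Rightarrow> 'a \<Rightarrow> real) \<Rightarrow> real \<Rightarrow> 'a set \<Rightarrow> bool" where
  "max_separated Z d a S \<longleftrightarrow> S \<subseteq> Z \<and> separated d a S \<and>
     (\<forall>W. S \<subseteq> W \<and> W \<subseteq> Z \<and> separated d a W \<longrightarrow> W = S)"

definition hk0 :: "'a set \<Rightarrow> ('a \<Rightarrow> 'a \<Rightarrow> real) \<Rightarrow> real \<Rightarrow> int" where
  "hk0 Z d r = (GREATEST k::int. sdiam d Z < r powi k)"

text \<open>Vertices are pairs (level k, point v \<in> V k); this realises the disjoint union.\<close>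
definition hverts :: "'a set \<Rightarrow> ('a \<Rightarrow> 'a \<Rightarrow> real) \<Rightarrow> real \<Rightarrow> (int \<Rightarrow> 'a set) \<Rightarrow> (int \<times> 'a) set" where
  "hverts Z d r V = {(k, v). hk0 Z d r \<le> k \<and> v \<in> V k}"

definition hball :: "'a set \<Rightarrow> ('a \<Rightarrow> 'a \<Rightarrow> real) \<Rightarrow> real \<Rightarrow> int \<times> 'a \<Rightarrow> 'a set" where
  "hball Z d r p = {z \<in> Z. d z (snd p) < 2 * r powi (fst p)}"

definition hcball :: "'a set \<Rightarrow> ('a \<Rightarrow> 'a \<Rightarrow> real) \<Rightarrow> real \<Rightarrow> int \<times> 'a \<Rightarrow> 'a set" where
  "hcball Z d r p = (Metric_space.mtopology Z d) closure_of (hball Z d r p)"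

definition hedge :: "'a set \<Rightarrow> ('a \<Rightarrow> 'a \<Rightarrow> real) \<Rightarrow> real \<Rightarrow> (int \<Rightarrow> 'a set)
    \<Rightarrow> int \<times> 'a \<Rightarrow> int \<times> 'a \<Rightarrow> bool" where
  "hedge Z d r V p q \<longleftrightarrow> p \<in> hverts Z d r V \<and> q \<in> hverts Z d r V \<and>
     ((fst p = fst q \<and> p \<noteq> q \<and> hcball Z d r p \<inter> hcball Z d r q \<noteq> {})
      \<or> (fst q = fst p + 1 \<and> hball Z d r q \<subseteq> hball Z d r p)
      \<or> (fst p = fst q + 1 \<and> hball Z d r p \<subseteq> hball Z d r q))"

definition hdist :: "'a set \<Rightarrow> ('a \<Rightarrow> 'a \<Rightarrow> real) \<Rightarrow> real \<Rightarrow> (int \<Rightarrow> 'a set)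
    \<Rightarrow> int \<times> 'a \<Rightarrow> int \<times> 'a \<Rightarrow> nat" where
  "hdist Z d r V = gdist (hedge Z d r V) (hverts Z d r V)"

definition horiz_close :: "('a \<Rightarrow> 'a \<Rightarrow> real) \<Rightarrow> real \<Rightarrow> int \<times> 'a \<Rightarrow> int \<times> 'a \<Rightarrow> bool" where
  "horiz_close d r p q \<longleftrightarrow> p \<noteq> q \<and> 0 \<le> min (fst p) (fst q) \<and>
     d (snd p) (snd q) < r powi (min (fst p) (fst q))"

definition tverts :: "(nat \<Rightarrow> 'c \<Rightarrow> 'a set set) \<Rightarrow> 'c \<Rightarrow> (nat \<times> 'a set) set" where
  "tverts \<U> c = {(j, U). U \<in> \<U> j c}"

definition tanc :: "nat \<times> 'a set \<Rightarrow> nat \<times> 'a set \<Rightarrow> bool" where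
  "tanc x y \<longleftrightarrow> fst x < fst y \<and> snd y \<subseteq> snd x"

definition tedge :: "(nat \<Rightarrow> 'c \<Rightarrow> 'a set set) \<Rightarrow> 'c \<Rightarrow> nat \<times> 'a set \<Rightarrow> nat \<times> 'a set \<Rightarrow> bool" where
  "tedge \<U> c x y \<longleftrightarrow> x \<in> tverts \<U> c \<and> y \<in> tverts \<U> c \<and>
     ((tanc x y \<and> (\<forall>z\<in>tverts \<U> c. tanc z y \<longrightarrow> fst z \<le> fst x))
      \<or> (tanc y x \<and> (\<forall>z\<in>tverts \<U> c. tanc z x \<longrightarrow> fst z \<le> fst y)))"

definition tdist :: "(nat \<Rightarrow> 'c \<Rightarrow> 'a set set) \<Rightarrow> 'c \<Rightarrow> nat \<times> 'a set \<Rightarrow> nat \<times> 'a set \<Rightarrow> nat" where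
  "tdist \<U> c = gdist (tedge \<U> c) (tverts \<U> c)"

definition bigB :: "'a set \<Rightarrow> ('a \<Rightarrow> 'a \<Rightarrow> real) \<Rightarrow> real \<Rightarrow> (int \<Rightarrow> 'a set) \<Rightarrow> nat \<Rightarrow> 'a set \<Rightarrow> 'a set" where
  "bigB Z d r V j U = \<Union>{hball Z d r (int j + 1, v) | v. v \<in> V (int j + 1) \<and> hball Z d r (int j + 1, v) \<inter> U \<noteq> {}}"

definition fmap :: "'a set \<Rightarrow> ('a \<Rightarrow> 'a \<Rightarrow> real) \<Rightarrow> real \<Rightarrow> (nat \<Rightarrow> 'c \<Rightarrow> 'a set set) \<Rightarrow> 'c
    \<Rightarrow> int \<times> 'a \<Rightarrow> nat \<times> 'a set" where
  "fmap Z d r \<U> c p =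
    (if fst p = hk0 Z d r then (0, Z)
     else (let jm = nat (max (fst p - 1) 0);
               j' = (GREATEST j'. j' \<le> jm \<and> (\<exists>U\<in>\<U> j' c. hball Z d r p \<subseteq> U))
           in (j', THE U. U \<in> \<U> j' c \<and> hball Z d r p \<subseteq> U)))"

definition colored_setting ::
  "'a set \<Rightarrow> ('a \<Rightarrow> 'a \<Rightarrow> real) \<Rightarrow> real \<Rightarrow> (int \<Rightarrow> 'a set) \<Rightarrow> nat \<Rightarrow> 'c set
     \<Rightarrow> (nat \<Rightarrow> 'c \<Rightarrow> 'a set set) \<Rightarrow> bool" where
  "colored_setting Z d r V n C \<U> \<longleftrightarrow>
     \<comment> \<open>bounded metric space with at least two points\<close>
     Metric_space Z d \<and> Metric_space.mbounded Z d Z \<and> (\<exists>x\<in>Z. \<exists>y\<in>Z. x \<noteq> y)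
     \<comment> \<open>hyperbolic approximation data\<close>
     \<and> 0 < r \<and> r \<le> 1/6
     \<and> (\<forall>k. hk0 Z d r \<le> k \<longrightarrow> max_separated Z d (r powi k) (V k))
     \<comment> \<open>colored tree assumptions\<close>
     \<and> cdim_eq Z d n \<and> r < min (sdiam d Z) (1 / sdiam d Z)
     \<and> finite C \<and> card C = n + 1
     \<and> (\<forall>j. \<forall>c\<in>C. \<forall>U\<in>\<U> j c. openin (Metric_space.mtopology Z d) U \<and> U \<noteq> {})
     \<and> (\<forall>j. \<Union>(\<Union>c\<in>C. \<U> j c) = Z)
     \<and> (\<forall>j. \<forall>c\<in>C. pairwise disjnt (\<U> j c))
     \<comment> \<open>(1)\<close>
     \<and> (\<forall>c\<in>C. \<U> 0 c = {Z})
     \<and> (\<forall>j\<ge>1. Sup ((sdiam d) ` (\<Union>c\<in>C. \<U> j c)) < r ^ j)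
     \<comment> \<open>(2)\<close>
     \<and> (\<forall>j. \<forall>v\<in>V (int j + 1). \<exists>U\<in>(\<Union>c\<in>C. \<U> j c). hball Z d r (int j + 1, v) \<subseteq> U)
     \<comment> \<open>(3)\<close>
     \<and> (\<forall>c\<in>C. \<forall>j j' U U'. U \<in> \<U> j c \<and> U' \<in> \<U> j' c \<and> U \<noteq> U' \<and> j' \<le> j \<longrightarrow>
          bigB Z d r V j U \<subseteq> U' \<or> bigB Z d r V j U \<inter> U' = {})"

end

theory Submission imports Defs begin

lemma gwalk_refl: "x \<in> Vs \<Longrightarrow> gwalk E Vs 0 x x"
  unfolding gwalk_def by (rule exI[of _ "[x]"]) auto

lemma gwalk_snoc:
  assumes "gwalk E Vs n x y" "E y z" "z \<in> Vs"
  shows "gwalk E Vs (Suc n) x z"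
proof -
  obtain xs where xs: "length xs = Suc n" "hd xs = x" "last xs = y" "set xs \<subseteq> Vs"
    "\<forall>i<n. E (xs ! i) (xs ! Suc i)" using assms(1) unfolding gwalk_def by blast
  have ly: "xs ! n = y" using xs(1,3) by (metis last_conv_nth diff_Suc_1 list.size(3) nat.distinct(1))
  show ?thesis unfolding gwalk_def
  proof (rule exI[of _ "xs @ [z]"], intro conjI)
    show "hd (xs @ [z]) = x" using xs by (cases xs) auto
    show "\<forall>i<Suc n. E ((xs @ [z]) ! i) ((xs @ [z]) ! Suc i)"
    proof (intro allI impI)
      fix i assume i: "i < Suc n"
      show "E ((xs @ [z]) ! i) ((xs @ [z]) ! Suc i)"
      proof (cases "i < n")
        case True then show ?thesis using xs by (simp add: nth_append)
      next
        case False then have "i = n" using i by simp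
        then show ?thesis using xs ly assms(2) by (simp add: nth_append)
      qed
    qed
  qed (use xs assms in auto)
qed

lemma gwalk_cons:
  assumes "E x y" "x \<in> Vs" "gwalk E Vs n y z"
  shows "gwalk E Vs (Suc n) x z"
proof -
  obtain xs where xs: "length xs = Suc n" "hd xs = y" "last xs = z" "set xs \<subseteq> Vs"
    "\<forall>i<n. E (xs ! i) (xs ! Suc i)" using assms(3) unfolding gwalk_def by blast
  have y: "xs ! 0 = y" using xs by (cases xs) auto
  show ?thesis unfolding gwalk_def
  proof (rule exI[of _ "x # xs"], intro conjI)
    show "\<forall>i<Suc n. E ((x # xs) ! i) ((x # xs) ! Suc i)"
    proof (intro allI impI)
      fix i assume i: "i < Suc n"
      show "E ((x # xs) ! i) ((x # xs) ! Suc i)"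
      proof (cases i)
        case 0 then show ?thesis using y assms(1) by simp
      next
        case (Suc k) then show ?thesis using xs i by simp
      qed
    qed
  qed (use xs assms in auto)
qed

lemma gdist_le: "gwalk E Vs n x y \<Longrightarrow> gdist E Vs x y \<le> n"
  unfolding gdist_def by (rule Least_le)

lemma gdist_walk: "gwalk E Vs n x y \<Longrightarrow> gwalk E Vs (gdist E Vs x y) x y"
  unfolding gdist_def by (rule LeastI)

lemma gwalk_potential:
  fixes \<phi> :: "'v \<Rightarrow> int"
  assumes E: "\<And>x y. E x y \<Longrightarrow> \<bar>\<phi> x - \<phi> y\<bar> \<le> 1"
    and w: "gwalk E Vs n x y"
  shows "\<bar>\<phi> x - \<phi> y\<bar> \<le> int n"
proof -
  obtain xs where xs: "length xs = Suc n" "hd xs = x" "last xs = y"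
    "\<forall>i<n. E (xs ! i) (xs ! Suc i)" using w unfolding gwalk_def by blast
  have x0: "xs ! 0 = x" using xs by (cases xs) auto
  have yn: "xs ! n = y" using xs(1,3) by (metis last_conv_nth diff_Suc_1 list.size(3) nat.distinct(1))
  have "\<forall>i. i \<le> n \<longrightarrow> \<bar>\<phi> (xs ! 0) - \<phi> (xs ! i)\<bar> \<le> int i"
  proof (intro allI)
    fix i show "i \<le> n \<longrightarrow> \<bar>\<phi> (xs ! 0) - \<phi> (xs ! i)\<bar> \<le> int i"
    proof (induction i)
      case 0 then show ?case by simp
    next
      case (Suc i)
      show ?case
      proof
        assume "Suc i \<le> n"
        then have "\<bar>\<phi> (xs ! 0) - \<phi> (xs ! i)\<bar> \<le> int i" "\<bar>\<phi> (xs ! i) - \<phi> (xs ! Suc i)\<bar> \<le> 1"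
          using Suc xs(4) E by auto
        then show "\<bar>\<phi> (xs ! 0) - \<phi> (xs ! Suc i)\<bar> \<le> int (Suc i)" by linarith
      qed
    qed
  qed
  then show ?thesis using x0 yn by auto
qed

lemma cover_gen:
  assumes ms: "max_separated Z d a S" and z: "z \<in> Z" and apos: "0 < a"
    and zero: "d z z = 0" and comm: "\<And>x y. d x y = d y x"
  shows "\<exists>v\<in>S. d z v < a"
proof (rule ccontr)
  assume H: "\<not> (\<exists>v\<in>S. d z v < a)"
  have Hv: "a \<le> d z v" if "v \<in> S" for v
  proof -
    have "\<not> d z v < a" using H that by blast
    then show ?thesis by simp
  qed
  have zS: "z \<notin> S"
  proof
    assume "z \<in> S" then have "a \<le> d z z" by (rule Hv)
    then show False using zero apos by simp
  qed
  have sepV: "separated d a S" using ms unfolding max_separated_def by blast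
  have sep: "separated d a (insert z S)" unfolding separated_def
  proof (intro ballI impI)
    fix x y assume x: "x \<in> insert z S" and y: "y \<in> insert z S" and xy: "x \<noteq> y"
    show "a \<le> d x y"
    proof (cases "x = z")
      case xz: True
      have "y \<in> S" using y xy xz by simp
      then show ?thesis using Hv xz by simp
    next
      case xz: False
      have xV: "x \<in> S" using x xz by simp
      show ?thesis
      proof (cases "y = z")
        case yz: True
        show ?thesis using Hv[OF xV] yz comm[of z x] by simp
      next
        case yz: False
        have "y \<in> S" using y yz by simp
        then show ?thesis using xV xy sepV unfolding separated_def by blast
      qed
    qed
  qed
  have "S \<subseteq> insert z S" by blast
  moreover have "insert z S \<subseteq> Z" using ms z unfolding max_separated_def by blast
  moreover have "\<forall>W. S \<subseteq> W \<and> W \<subseteq> Z \<and> separated d a W \<longrightarrow> W = S"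
    using ms unfolding max_separated_def by blast
  ultimately have "insert z S = S" using sep by blast
  then show False using zS by blast
qed


definition ancs :: "(nat \<Rightarrow> 'c \<Rightarrow> 'a set set) \<Rightarrow> 'c \<Rightarrow> nat \<times> 'a set \<Rightarrow> (nat \<times> 'a set) set" where
  "ancs U c x = {z \<in> tverts U c. tanc z x}"

locale CS =
  fixes Z :: "'a set" and d :: "'a \<Rightarrow> 'a \<Rightarrow> real" and r :: real
    and V :: "int \<Rightarrow> 'a set" and n :: nat and C :: "'c set"
    and \<U> :: "nat \<Rightarrow> 'c \<Rightarrow> 'a set set"
  assumes cs: "colored_setting Z d r V n C \<U>"
begin

lemma csD1: "Metric_space Z d"
  using cs unfolding colored_setting_def by (elim conjE) assumption
lemma csD2: "0 < r"
  using cs unfolding colored_setting_def by (elim conjE) assumption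
lemma csD3: "r \<le> 1/6"
  using cs unfolding colored_setting_def by (elim conjE) assumption
lemma csD4: "\<forall>k. hk0 Z d r \<le> k \<longrightarrow> max_separated Z d (r powi k) (V k)"
  using cs unfolding colored_setting_def by (elim conjE) assumption
lemma csD5: "r < min (sdiam d Z) (1 / sdiam d Z)"
  using cs unfolding colored_setting_def by (elim conjE) assumption
lemma csD6: "finite C"
  using cs unfolding colored_setting_def by (elim conjE) assumption
lemma csD7: "card C = n + 1"
  using cs unfolding colored_setting_def by (elim conjE) assumption
lemma csD8: "\<forall>j. \<forall>c\<in>C. \<forall>U\<in>\<U> j c. openin (Metric_space.mtopology Z d) U \<and> U \<noteq> {}"
  using cs unfolding colored_setting_def by (elim conjE) assumption
lemma csD9: "\<forall>j. \<forall>c\<in>C. pairwise disjnt (\<U> j c)"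
  using cs unfolding colored_setting_def by (elim conjE) assumption
lemma csD10: "\<forall>c\<in>C. \<U> 0 c = {Z}"
  using cs unfolding colored_setting_def by (elim conjE) assumption
lemma csD11: "\<forall>j. \<forall>v\<in>V (int j + 1). \<exists>U\<in>(\<Union>c\<in>C. \<U> j c). hball Z d r (int j + 1, v) \<subseteq> U"
  using cs unfolding colored_setting_def by (elim conjE) assumption
lemma csD12: "\<forall>c\<in>C. \<forall>j j' U U'. U \<in> \<U> j c \<and> U' \<in> \<U> j' c \<and> U \<noteq> U' \<and> j' \<le> j \<longrightarrow>
          bigB Z d r V j U \<subseteq> U' \<or> bigB Z d r V j U \<inter> U' = {}"
  using cs unfolding colored_setting_def by (elim conjE) assumption

lemma ms: "Metric_space Z d" using csD1 csD2 csD3 by blast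
lemma rpos: "0 < r" using csD1 csD2 csD3 by blast
lemma r16: "r \<le> 1/6" using csD1 csD2 csD3 by blast
lemma msep: "hk0 Z d r \<le> k \<Longrightarrow> max_separated Z d (r powi k) (V k)"
  using csD4 by blast
lemma rdiam: "r < sdiam d Z" "r < 1 / sdiam d Z"
  using csD5 by auto
lemma finC: "finite C" and cardC: "card C = n + 1"
  using csD6 csD7 by auto
lemma Uopen: "c \<in> C \<Longrightarrow> U \<in> \<U> j c \<Longrightarrow> openin (Metric_space.mtopology Z d) U"
  using csD8 by blast
lemma Une: "c \<in> C \<Longrightarrow> U \<in> \<U> j c \<Longrightarrow> U \<noteq> {}"
  using csD8 by blast
lemma Udisj: "c \<in> C \<Longrightarrow> pairwise disjnt (\<U> j c)"
  using csD9 by blast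
lemma U0: "c \<in> C \<Longrightarrow> \<U> 0 c = {Z}"
  using csD10 by blast
lemma cond2: "v \<in> V (int j + 1) \<Longrightarrow> \<exists>c\<in>C. \<exists>U\<in>\<U> j c. hball Z d r (int j + 1, v) \<subseteq> U"
  using csD11 by blast
lemma cond3: "c \<in> C \<Longrightarrow> U \<in> \<U> j c \<Longrightarrow> U' \<in> \<U> j' c \<Longrightarrow> U \<noteq> U' \<Longrightarrow> j' \<le> j \<Longrightarrow>
          bigB Z d r V j U \<subseteq> U' \<or> bigB Z d r V j U \<inter> U' = {}"
  using csD12 by blast

interpretation M: Metric_space Z d by (rule ms)

lemma U_sub: "c \<in> C \<Longrightarrow> U \<in> \<U> j c \<Longrightarrow> U \<subseteq> Z"
proof -
  assume a: "c \<in> C" "U \<in> \<U> j c"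
  have "U \<subseteq> topspace (Metric_space.mtopology Z d)" by (rule openin_subset[OF Uopen[OF a]])
  then show "U \<subseteq> Z" by simp
qed

lemma hk0_le: "hk0 Z d r \<le> 0"
proof -
  let ?P = "\<lambda>k::int. sdiam d Z < r powi k"
  have sp: "0 < sdiam d Z" using rdiam rpos by linarith
  have Pm1: "?P (-1)"
  proof -
    have "r * sdiam d Z < 1" using rdiam(2) sp by (simp add: field_simps)
    then have "sdiam d Z < 1 / r" using rpos by (simp add: field_simps)
    then show ?thesis by (simp add: power_int_minus divide_inverse)
  qed
  have npos: "\<not> ?P k" if "k \<ge> 1" for k
  proof -
    define m where "m = nat k"
    have m: "k = int m" "m \<ge> 1" using \<open>k \<ge> 1\<close> unfolding m_def by auto
    have "r ^ m \<le> r ^ 1" using rpos r16 m(2) by (intro power_decreasing) auto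
    then show ?thesis using m rdiam(1) by (simp add: power_int_of_nat)
  qed
  show ?thesis
  proof (cases "?P 0")
    case True
    have "hk0 Z d r = 0" unfolding hk0_def
    proof (rule Greatest_equality)
      show "?P 0" by (rule True)
      fix y assume "?P y" then show "y \<le> 0" using npos[of y] by (cases "y \<ge> 1") auto
    qed
    then show ?thesis by simp
  next
    case False
    have "hk0 Z d r = -1" unfolding hk0_def
    proof (rule Greatest_equality)
      show "?P (-1)" by (rule Pm1)
      fix y assume Py: "?P y"
      show "y \<le> -1"
      proof (rule ccontr)
        assume "\<not> y \<le> -1"
        then have "y = 0 \<or> y \<ge> 1" by linarith
        then show False using Py False npos[of y] by auto
      qed
    qed
    then show ?thesis by simp
  qed
qed

lemma V_sub: "hk0 Z d r \<le> k \<Longrightarrow> V k \<subseteq> Z"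
  using msep unfolding max_separated_def by blast

lemma cover:
  assumes k: "hk0 Z d r \<le> k" and z: "z \<in> Z"
  shows "\<exists>v\<in>V k. d z v < r powi k"
  by (rule cover_gen[OF msep[OF k] z zero_less_power_int[OF rpos]]) (use z M.commute in auto)

lemma center_in_ball:
  assumes "hk0 Z d r \<le> k" "v \<in> V k" shows "v \<in> hball Z d r (k, v)"
proof -
  have vZ: "v \<in> Z" using V_sub assms by blast
  have "0 < r powi k" using rpos by (rule zero_less_power_int)
  then show ?thesis using vZ unfolding hball_def by simp
qed

lemma hball_sub: "hball Z d r p \<subseteq> Z" unfolding hball_def by auto

lemma bigB_sup:
  assumes c: "c \<in> C" and W: "W \<in> \<U> b c"
  shows "W \<subseteq> bigB Z d r V b W"
proof
  fix z assume zW: "z \<in> W"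
  have zZ: "z \<in> Z" using U_sub[OF c W] zW by blast
  have lev: "hk0 Z d r \<le> int b + 1" using hk0_le by simp
  obtain v where v: "v \<in> V (int b + 1)" "d z v < r powi (int b + 1)" using cover[OF lev zZ] by blast
  have "0 < r powi (int b + 1)" using rpos by (rule zero_less_power_int)
  then have "z \<in> hball Z d r (int b + 1, v)" using v zZ unfolding hball_def by simp
  then show "z \<in> bigB Z d r V b W" unfolding bigB_def using v zW by blast
qed

lemma nest:
  assumes c: "c \<in> C" and U: "U \<in> \<U> a c" and W: "W \<in> \<U> b c" and ab: "a \<le> b" and i: "U \<inter> W \<noteq> {}"
  shows "W \<subseteq> U"
proof (cases "W = U")
  case False
  have "bigB Z d r V b W \<subseteq> U \<or> bigB Z d r V b W \<inter> U = {}"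
    by (rule cond3[OF c W U False ab])
  then show ?thesis using bigB_sup[OF c W] i by blast
qed simp

lemma same_level:
  assumes c: "c \<in> C" and U: "U \<in> \<U> a c" and W: "W \<in> \<U> a c" and i: "U \<inter> W \<noteq> {}"
  shows "U = W"
  using Udisj[OF c, of a] U W i unfolding pairwise_def disjnt_def by blast


lemma ball_step:
  assumes m: "hk0 Z d r \<le> m - 1" and w: "w \<in> V m" and w': "w' \<in> V (m - 1)"
    and dw: "d w w' < r powi (m - 1)"
  shows "hball Z d r (m, w) \<subseteq> hball Z d r (m - 1, w')"
proof
  fix z assume z: "z \<in> hball Z d r (m, w)"
  then have zZ: "z \<in> Z" and dz: "d z w < 2 * r powi m" by (auto simp: hball_def)
  have wZ: "w \<in> Z" using V_sub[of m] m w by auto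
  have w'Z: "w' \<in> Z" using V_sub[of "m - 1"] m w' by auto
  have tri: "d z w' \<le> d z w + d w w'" by (rule M.triangle[OF zZ wZ w'Z])
  define t where "t = r powi (m - 1)"
  have tpos: "0 < t" unfolding t_def using rpos by (rule zero_less_power_int)
  have rm: "r powi m = t * r" unfolding t_def using power_int_add_1[of r "m - 1"] rpos by simp
  have "t * r \<le> t * (1/6)" using r16 tpos by (intro mult_left_mono) auto
  then have tr: "t * r \<le> t / 6" by simp
  moreover have "d z w < 2 * (t * r)" using dz rm by simp
  ultimately have "d z w' < 2 * t" using tri dw t_def tpos by linarith
  then show "z \<in> hball Z d r (m - 1, w')" using zZ unfolding hball_def t_def by simp
qed

lemma chain:
  assumes v: "v \<in> V j" "hk0 Z d r \<le> j"
  shows "hk0 Z d r \<le> j - int i \<Longrightarrow> \<exists>w\<in>V (j - int i). hball Z d r (j, v) \<subseteq> hball Z d r (j - int i, w)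
     \<and> gwalk (hedge Z d r V) (hverts Z d r V) i (j, v) (j - int i, w)
     \<and> gwalk (hedge Z d r V) (hverts Z d r V) i (j - int i, w) (j, v)"
proof (induction i)
  case 0
  have "(j, v) \<in> hverts Z d r V" using v unfolding hverts_def by simp
  then show ?case using v by (auto intro: gwalk_refl)
next
  case (Suc i)
  define m where "m = j - int i"
  have m1: "j - int (Suc i) = m - 1" unfolding m_def by simp
  have hm: "hk0 Z d r \<le> m - 1" using Suc.prems m1 by simp
  then have "hk0 Z d r \<le> j - int i" unfolding m_def by simp
  then obtain w where w: "w \<in> V m" "hball Z d r (j, v) \<subseteq> hball Z d r (m, w)"
    "gwalk (hedge Z d r V) (hverts Z d r V) i (j, v) (m, w)"
    "gwalk (hedge Z d r V) (hverts Z d r V) i (m, w) (j, v)"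
    using Suc.IH unfolding m_def by blast
  have wZ: "w \<in> Z" using V_sub[of m] hm w(1) by auto
  obtain w' where w': "w' \<in> V (m - 1)" "d w w' < r powi (m - 1)" using cover[OF hm wZ] by blast
  have bs: "hball Z d r (m, w) \<subseteq> hball Z d r (m - 1, w')" by (rule ball_step[OF hm w(1) w'])
  have vm: "(m, w) \<in> hverts Z d r V" using hm w(1) unfolding hverts_def by simp
  have vm1: "(m - 1, w') \<in> hverts Z d r V" using hm w'(1) unfolding hverts_def by simp
  have e1: "hedge Z d r V (m, w) (m - 1, w')" unfolding hedge_def using vm vm1 bs by simp
  have e2: "hedge Z d r V (m - 1, w') (m, w)" unfolding hedge_def using vm vm1 bs by simp
  show ?case unfolding m1
    using w'(1) w(2) bs gwalk_snoc[OF w(3) e1 vm1] gwalk_cons[OF e2 vm1 w(4)] by blast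
qed

lemma fmap_char:
  assumes c: "c \<in> C" and p: "(int a, v) \<in> hverts Z d r V"
  obtains i U where "fmap Z d r \<U> c (int a, v) = (i, U)" "i \<le> a - 1" "U \<in> \<U> i c"
    "hball Z d r (int a, v) \<subseteq> U"
    "\<And>k U'. k \<le> a - 1 \<Longrightarrow> U' \<in> \<U> k c \<Longrightarrow> hball Z d r (int a, v) \<subseteq> U' \<Longrightarrow> k \<le> i"
proof -
  have lev: "hk0 Z d r \<le> int a" "v \<in> V (int a)" using p unfolding hverts_def by auto
  have vB: "v \<in> hball Z d r (int a, v)" by (rule center_in_ball[OF lev])
  show ?thesis
  proof (cases "int a = hk0 Z d r")
    case True
    then have a0: "a = 0" using hk0_le by simp
    have f: "fmap Z d r \<U> c (int a, v) = (0, Z)" unfolding fmap_def using True by simp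
    show ?thesis
      by (rule that[OF f]) (use a0 U0[OF c] hball_sub in auto)
  next
    case False
    have jm: "nat (max (int a - 1) 0) = a - 1" by (cases a) auto
    define P where "P = (\<lambda>j'. j' \<le> a - 1 \<and> (\<exists>U\<in>\<U> j' c. hball Z d r (int a, v) \<subseteq> U))"
    define G where "G = Greatest P"
    have f: "fmap Z d r \<U> c (int a, v) = (G, THE U. U \<in> \<U> G c \<and> hball Z d r (int a, v) \<subseteq> U)"
      unfolding fmap_def G_def P_def using False jm by (simp add: Let_def)
    have P0: "P 0" unfolding P_def using U0[OF c] hball_sub by auto
    have bnd: "\<And>y. P y \<Longrightarrow> y \<le> a - 1" unfolding P_def by auto
    have PG: "P G" unfolding G_def by (rule GreatestI_nat[of P 0 "a - 1", OF P0 bnd])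
    have Gmax: "k \<le> G" if "P k" for k unfolding G_def by (rule Greatest_le_nat[of P k "a - 1", OF that bnd])
    obtain U where U: "U \<in> \<U> G c" "hball Z d r (int a, v) \<subseteq> U" using PG unfolding P_def by blast
    have th: "(THE U. U \<in> \<U> G c \<and> hball Z d r (int a, v) \<subseteq> U) = U"
    proof (rule the_equality)
      show "U \<in> \<U> G c \<and> hball Z d r (int a, v) \<subseteq> U" using U by blast
      fix U2 assume U2: "U2 \<in> \<U> G c \<and> hball Z d r (int a, v) \<subseteq> U2"
      then have "U2 \<inter> U \<noteq> {}" using U vB by blast
      then show "U2 = U" using same_level[OF c _ U(1)] U2 by blast
    qed
    show ?thesis
    proof (rule that)
      show "fmap Z d r \<U> c (int a, v) = (G, U)" using f th by simp
      show "G \<le> a - 1" using PG unfolding P_def by blast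
      show "\<And>k U'. k \<le> a - 1 \<Longrightarrow> U' \<in> \<U> k c \<Longrightarrow> hball Z d r (int a, v) \<subseteq> U' \<Longrightarrow> k \<le> G"
        using Gmax unfolding P_def by blast
    qed (use U in auto)
  qed
qed


lemma ball_lo:
  assumes lo: "(int b, w) \<in> hverts Z d r V" and vZ: "v \<in> Z" and dvw: "d v w < r ^ b"
  shows "v \<in> hball Z d r (int b, w)"
proof -
  have "0 < r ^ b" using rpos by simp
  then show ?thesis using vZ dvw unfolding hball_def by (simp add: power_int_of_nat)
qed

lemma hv_Z: "(k, v) \<in> hverts Z d r V \<Longrightarrow> v \<in> Z"
  using V_sub unfolding hverts_def by auto

lemma comparable:
  assumes c: "c \<in> C" and hi: "(int a, v) \<in> hverts Z d r V" and lo: "(int b, w) \<in> hverts Z d r V"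
    and ab: "b \<le> a" and dvw: "d v w < r ^ b"
  shows "fmap Z d r \<U> c (int a, v) = fmap Z d r \<U> c (int b, w)
     \<or> tanc (fmap Z d r \<U> c (int a, v)) (fmap Z d r \<U> c (int b, w))
     \<or> tanc (fmap Z d r \<U> c (int b, w)) (fmap Z d r \<U> c (int a, v))"
proof -
  obtain i U where fi: "fmap Z d r \<U> c (int a, v) = (i, U)" "U \<in> \<U> i c" "hball Z d r (int a, v) \<subseteq> U"
    using fmap_char[OF c hi] by metis
  obtain i' U' where fi': "fmap Z d r \<U> c (int b, w) = (i', U')" "U' \<in> \<U> i' c" "hball Z d r (int b, w) \<subseteq> U'"
    using fmap_char[OF c lo] by metis
  have vB: "v \<in> hball Z d r (int a, v)" using hi center_in_ball unfolding hverts_def by auto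
  have vB': "v \<in> hball Z d r (int b, w)" by (rule ball_lo[OF lo hv_Z[OF hi] dvw])
  have int: "U \<inter> U' \<noteq> {}" using vB vB' fi fi' by blast
  show ?thesis
  proof (cases "i < i'")
    case True
    have "U' \<subseteq> U" by (rule nest[OF c fi(2) fi'(2)]) (use True int in auto)
    then show ?thesis using fi fi' True unfolding tanc_def by simp
  next
    case False
    show ?thesis
    proof (cases "i = i'")
      case True
      have "U = U'" using same_level[OF c fi(2)] fi'(2) int True by blast
      then show ?thesis using fi fi' True by simp
    next
      case False
      then have "i' < i" using \<open>\<not> i < i'\<close> by simp
      have "U \<subseteq> U'" by (rule nest[OF c fi'(2) fi(2)]) (use \<open>i' < i\<close> int in auto)
      then show ?thesis using fi fi' \<open>i' < i\<close> unfolding tanc_def by simp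
    qed
  qed
qed

lemma tv_ne: "c \<in> C \<Longrightarrow> x \<in> tverts \<U> c \<Longrightarrow> snd x \<noteq> {}"
  using Une unfolding tverts_def by auto

lemma tv_in: "x \<in> tverts \<U> c \<longleftrightarrow> snd x \<in> \<U> (fst x) c"
  unfolding tverts_def by (cases x) auto

lemma ancs_finite:
  assumes c: "c \<in> C" and x: "x \<in> tverts \<U> c"
  shows "finite (ancs \<U> c x)"
proof -
  have inj: "inj_on fst (ancs \<U> c x)"
  proof (rule inj_onI)
    fix z1 z2 assume z1: "z1 \<in> ancs \<U> c x" and z2: "z2 \<in> ancs \<U> c x" and e: "fst z1 = fst z2"
    have s1: "snd z1 \<in> \<U> (fst z1) c" "snd x \<subseteq> snd z1" using z1 unfolding ancs_def tanc_def tv_in by auto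
    have s2: "snd z2 \<in> \<U> (fst z1) c" "snd x \<subseteq> snd z2" using z2 e unfolding ancs_def tanc_def tv_in by auto
    have "snd z1 \<inter> snd z2 \<noteq> {}" using s1(2) s2(2) tv_ne[OF c x] by blast
    then have "snd z1 = snd z2" using same_level[OF c s1(1) s2(1)] by blast
    then show "z1 = z2" using e by (simp add: prod_eq_iff)
  qed
  have "fst ` ancs \<U> c x \<subseteq> {..< fst x}" unfolding ancs_def tanc_def by auto
  then have "finite (fst ` ancs \<U> c x)" using finite_subset by blast
  then show ?thesis using finite_imageD inj by blast
qed

lemma parent_ancs:
  assumes c: "c \<in> C" and x: "x \<in> tverts \<U> c" and y: "y \<in> tverts \<U> c" and xy: "tanc x y"
    and mx: "\<forall>z\<in>tverts \<U> c. tanc z y \<longrightarrow> fst z \<le> fst x"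
  shows "ancs \<U> c y = insert x (ancs \<U> c x)" "x \<notin> ancs \<U> c x"
proof -
  show "x \<notin> ancs \<U> c x" unfolding ancs_def tanc_def by simp
  show "ancs \<U> c y = insert x (ancs \<U> c x)"
  proof
    show "insert x (ancs \<U> c x) \<subseteq> ancs \<U> c y"
      using x xy unfolding ancs_def tanc_def by auto
    show "ancs \<U> c y \<subseteq> insert x (ancs \<U> c x)"
    proof
      fix z assume z: "z \<in> ancs \<U> c y"
      then have zt: "z \<in> tverts \<U> c" and zy: "tanc z y" unfolding ancs_def by auto
      have le: "fst z \<le> fst x" using mx zt zy by blast
      have sz: "snd z \<in> \<U> (fst z) c" using zt tv_in by blast
      have sx: "snd x \<in> \<U> (fst x) c" using x tv_in by blast
      have ne: "snd z \<inter> snd x \<noteq> {}" using zy xy tv_ne[OF c y] unfolding tanc_def by blast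
      show "z \<in> insert x (ancs \<U> c x)"
      proof (cases "fst z = fst x")
        case True
        then have "snd z = snd x" using same_level[OF c sz] sx ne by simp
        then have "z = x" using True by (simp add: prod_eq_iff)
        then show ?thesis by simp
      next
        case False
        then have lt: "fst z < fst x" using le by simp
        have "snd x \<subseteq> snd z" by (rule nest[OF c sz sx]) (use lt ne in auto)
        then show ?thesis using zt lt unfolding ancs_def tanc_def by simp
      qed
    qed
  qed
qed

lemma parent_card:
  assumes c: "c \<in> C" and x: "x \<in> tverts \<U> c" and y: "y \<in> tverts \<U> c" and xy: "tanc x y"
    and mx: "\<forall>z\<in>tverts \<U> c. tanc z y \<longrightarrow> fst z \<le> fst x"
  shows "card (ancs \<U> c y) = Suc (card (ancs \<U> c x))"
  using parent_ancs[OF assms] ancs_finite[OF c x] by simp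

lemma tedge_depth:
  assumes c: "c \<in> C" and e: "tedge \<U> c x y"
  shows "\<bar>int (card (ancs \<U> c x)) - int (card (ancs \<U> c y))\<bar> \<le> 1"
proof -
  have x: "x \<in> tverts \<U> c" and y: "y \<in> tverts \<U> c" using e unfolding tedge_def by auto
  from e have "(tanc x y \<and> (\<forall>z\<in>tverts \<U> c. tanc z y \<longrightarrow> fst z \<le> fst x))
      \<or> (tanc y x \<and> (\<forall>z\<in>tverts \<U> c. tanc z x \<longrightarrow> fst z \<le> fst y))" unfolding tedge_def by blast
  then show ?thesis
  proof
    assume h: "tanc x y \<and> (\<forall>z\<in>tverts \<U> c. tanc z y \<longrightarrow> fst z \<le> fst x)"
    show ?thesis using parent_card[OF c x y] h by simp
  next
    assume h: "tanc y x \<and> (\<forall>z\<in>tverts \<U> c. tanc z x \<longrightarrow> fst z \<le> fst y)"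
    show ?thesis using parent_card[OF c y x] h by simp
  qed
qed

lemma tree_walk:
  assumes c: "c \<in> C"
  shows "b \<in> tverts \<U> c \<Longrightarrow> a \<in> tverts \<U> c \<Longrightarrow> tanc a b \<Longrightarrow>
    (\<exists>n. gwalk (tedge \<U> c) (tverts \<U> c) n b a) \<and> (\<exists>n. gwalk (tedge \<U> c) (tverts \<U> c) n a b)"
proof (induction "fst b" arbitrary: b rule: less_induct)
  case less
  have fin: "finite (ancs \<U> c b)" by (rule ancs_finite[OF c less.prems(1)])
  have aA: "a \<in> ancs \<U> c b" using less.prems unfolding ancs_def by simp
  define m where "m = Max (fst ` ancs \<U> c b)"
  have "m \<in> fst ` ancs \<U> c b" unfolding m_def using fin aA by (intro Max_in) auto
  then obtain x where xA: "x \<in> ancs \<U> c b" and xm: "fst x = m" by blast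
  have x: "x \<in> tverts \<U> c" and xb: "tanc x b" using xA unfolding ancs_def by auto
  have mx: "\<forall>z\<in>tverts \<U> c. tanc z b \<longrightarrow> fst z \<le> fst x"
  proof (intro ballI impI)
    fix z assume "z \<in> tverts \<U> c" "tanc z b"
    then have "z \<in> ancs \<U> c b" unfolding ancs_def by simp
    then show "fst z \<le> fst x" unfolding xm m_def using fin by (intro Max_ge) auto
  qed
  have e1: "tedge \<U> c x b" unfolding tedge_def using x less.prems(1) xb mx by blast
  have e2: "tedge \<U> c b x" unfolding tedge_def using x less.prems(1) xb mx by blast
  have ax: "a = x \<or> tanc a x"
  proof -
    have le: "fst a \<le> fst x" using mx less.prems by blast
    have sa: "snd a \<in> \<U> (fst a) c" using less.prems(2) tv_in by blast
    have sx: "snd x \<in> \<U> (fst x) c" using x tv_in by blast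
    have ne: "snd a \<inter> snd x \<noteq> {}" using less.prems(3) xb tv_ne[OF c less.prems(1)] unfolding tanc_def by blast
    show ?thesis
    proof (cases "fst a = fst x")
      case True
      then have "snd a = snd x" using same_level[OF c sa] sx ne by simp
      then show ?thesis using True by (simp add: prod_eq_iff)
    next
      case False
      then have lt: "fst a < fst x" using le by simp
      have "snd x \<subseteq> snd a" by (rule nest[OF c sa sx]) (use lt ne in auto)
      then show ?thesis using lt unfolding tanc_def by simp
    qed
  qed
  have IHx: "(\<exists>n. gwalk (tedge \<U> c) (tverts \<U> c) n x a) \<and> (\<exists>n. gwalk (tedge \<U> c) (tverts \<U> c) n a x)"
  proof (cases "a = x")
    case True
    then show ?thesis using x gwalk_refl by metis
  next
    case False
    then have "tanc a x" using ax by simp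
    moreover have "fst x < fst b" using xb unfolding tanc_def by simp
    ultimately show ?thesis using less.hyps x less.prems(2) by blast
  qed
  then obtain n1 n2 where w1: "gwalk (tedge \<U> c) (tverts \<U> c) n1 x a"
    and w2: "gwalk (tedge \<U> c) (tverts \<U> c) n2 a x" by blast
  show ?case
    using gwalk_cons[OF e2 less.prems(1) w1] gwalk_snoc[OF w2 e1 less.prems(1)] by blast
qed


lemma depth_bound:
  assumes c: "c \<in> C" and hi: "(int a, v) \<in> hverts Z d r V" and lo: "(int b, w) \<in> hverts Z d r V"
    and ab: "b \<le> a" and dvw: "d v w < r ^ b"
  shows "int (card {k. b \<le> k \<and> k < a \<and> (\<exists>U\<in>\<U> k c. hball Z d r (int a, v) \<subseteq> U)})
     \<le> \<bar>int (card (ancs \<U> c (fmap Z d r \<U> c (int a, v)))) - int (card (ancs \<U> c (fmap Z d r \<U> c (int b, w))))\<bar> + 1"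
proof -
  define N where "N = {k. b \<le> k \<and> k < a \<and> (\<exists>U\<in>\<U> k c. hball Z d r (int a, v) \<subseteq> U)}"
  obtain i U where fi: "fmap Z d r \<U> c (int a, v) = (i, U)" "i \<le> a - 1" "U \<in> \<U> i c"
    "hball Z d r (int a, v) \<subseteq> U"
    "\<And>k U'. k \<le> a - 1 \<Longrightarrow> U' \<in> \<U> k c \<Longrightarrow> hball Z d r (int a, v) \<subseteq> U' \<Longrightarrow> k \<le> i"
    using fmap_char[OF c hi] by metis
  obtain i' U' where fi': "fmap Z d r \<U> c (int b, w) = (i', U')" "i' \<le> b - 1" "U' \<in> \<U> i' c"
    "hball Z d r (int b, w) \<subseteq> U'"
    using fmap_char[OF c lo] by metis
  have i'b: "i' \<le> b" using fi'(2) by simp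
  have Nle: "N \<subseteq> {k. b \<le> k \<and> k \<le> i}"
  proof
    fix k assume "k \<in> N"
    then have k: "b \<le> k" "k < a" "\<exists>U\<in>\<U> k c. hball Z d r (int a, v) \<subseteq> U" unfolding N_def by auto
    then have "k \<le> i" using fi(5)[of k] by auto
    then show "k \<in> {k. b \<le> k \<and> k \<le> i}" using k by simp
  qed
  have finN: "finite N" using Nle finite_subset[of N "{..i}"] by auto
  define A where "A = ancs \<U> c (i', U')"
  define B where "B = ancs \<U> c (i, U)"
  note cmp = comparable[OF c hi lo ab dvw]
  have "int (card N) \<le> \<bar>int (card B) - int (card A)\<bar> + 1"
  proof -
    consider (eq) "(i, U) = (i', U')" | (hl) "tanc (i, U) (i', U')" | (lh) "tanc (i', U') (i, U)"
      using cmp fi(1) fi'(1) by auto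
    then show ?thesis
    proof cases
      case eq
      then have "N \<subseteq> {i}" using Nle i'b by auto
      then have "card N \<le> 1" using card_mono[of "{i}" N] by simp
      then show ?thesis by simp
    next
      case hl
      then have "i < i'" unfolding tanc_def by simp
      then have "N = {}" using Nle i'b by auto
      then show ?thesis by simp
    next
      case lh
      then have lt: "i' < i" and sub: "U \<subseteq> U'" unfolding tanc_def by auto
      define S where "S = N - {i, i'}"
      define g where "g = (\<lambda>k. (k, SOME W. W \<in> \<U> k c \<and> hball Z d r (int a, v) \<subseteq> W))"
      have gS: "g k \<in> B" "fst (g k) = k" if "k \<in> S" for k
      proof -
        have k: "b \<le> k" "k < a" "k \<noteq> i" "k \<noteq> i'" "\<exists>W\<in>\<U> k c. hball Z d r (int a, v) \<subseteq> W"
          using that unfolding S_def N_def by auto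
        have "k \<le> i" using k fi(5)[of k] by auto
        then have ki: "k < i" using k(3) by simp
        define W where "W = (SOME W. W \<in> \<U> k c \<and> hball Z d r (int a, v) \<subseteq> W)"
        have W: "W \<in> \<U> k c \<and> hball Z d r (int a, v) \<subseteq> W" unfolding W_def
          using k(5) by (metis (mono_tags, lifting) someI_ex)
        have vB: "v \<in> hball Z d r (int a, v)" using hi center_in_ball unfolding hverts_def by auto
        have "U \<inter> W \<noteq> {}" using W fi(4) vB by blast
        then have "U \<subseteq> W" using nest[OF c W[THEN conjunct1] fi(3)] ki by auto
        then show "g k \<in> B" unfolding B_def ancs_def g_def W_def[symmetric] tanc_def tverts_def
          using W ki by simp
        show "fst (g k) = k" unfolding g_def by simp
      qed
      have tvlo: "(i', U') \<in> tverts \<U> c" using fi'(3) unfolding tverts_def by simp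
      have tvhi: "(i, U) \<in> tverts \<U> c" using fi(3) unfolding tverts_def by simp
      have finB: "finite B" unfolding B_def by (rule ancs_finite[OF c tvhi])
      have sub1: "insert (i', U') A \<union> g ` S \<subseteq> B"
      proof -
        have "(i', U') \<in> B" using lh tvlo unfolding B_def ancs_def by simp
        moreover have "A \<subseteq> B" unfolding A_def B_def ancs_def using lh unfolding tanc_def by auto
        ultimately show ?thesis using gS by auto
      qed
      have disj: "insert (i', U') A \<inter> g ` S = {}"
      proof -
        have "fst z \<le> i'" if "z \<in> insert (i', U') A" for z using that unfolding A_def ancs_def tanc_def by auto
        moreover have "fst z > i'" if zS: "z \<in> g ` S" for z
        proof -
          obtain k where "k \<in> S" "z = g k" using zS by blast
          then have "b \<le> k" "k \<noteq> i'" "fst z = k" using gS unfolding S_def N_def by auto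
          then show ?thesis using i'b by simp
        qed
        ultimately show ?thesis by fastforce
      qed
      have injg: "inj_on g S" by (rule inj_onI) (metis gS(2))
      have finA: "finite A" unfolding A_def by (rule ancs_finite[OF c tvlo])
      have finS: "finite S" unfolding S_def using finN by simp
      have notA: "(i', U') \<notin> A" unfolding A_def ancs_def tanc_def by simp
      have "card (insert (i', U') A \<union> g ` S) = Suc (card A) + card S"
        using card_Un_disjoint[OF _ _ disj] finA finS card_image[OF injg] notA by simp
      then have c1: "Suc (card A) + card S \<le> card B" using card_mono[OF finB sub1] by simp
      have "N \<subseteq> S \<union> {i, i'}" unfolding S_def by blast
      then have "card N \<le> card (S \<union> {i, i'})" using finS by (intro card_mono) auto
      also have "\<dots> \<le> card S + card {i, i'}" by (rule card_Un_le)
      also have "\<dots> \<le> card S + 2" using lt by simp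
      finally show ?thesis using c1 by linarith
    qed
  qed
  then show ?thesis unfolding N_def A_def B_def using fi(1) fi'(1) by simp
qed


lemma exists_color:
  assumes hi: "(int a, v) \<in> hverts Z d r V" and ab: "b \<le> a"
  shows "\<exists>c\<in>C. a - b \<le> card C * card {k. b \<le> k \<and> k < a \<and> (\<exists>U\<in>\<U> k c. hball Z d r (int a, v) \<subseteq> U)}"
proof (rule ccontr)
  define N where "N = (\<lambda>c. {k. b \<le> k \<and> k < a \<and> (\<exists>U\<in>\<U> k c. hball Z d r (int a, v) \<subseteq> U)})"
  assume "\<not> ?thesis"
  then have lt: "\<And>c. c \<in> C \<Longrightarrow> card C * card (N c) < a - b" unfolding N_def by auto
  have lev: "hk0 Z d r \<le> int a" "v \<in> V (int a)" using hi unfolding hverts_def by auto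
  have cov: "{b..<a} \<subseteq> (\<Union>c\<in>C. N c)"
  proof
    fix k assume k: "k \<in> {b..<a}"
    have e: "int a - int (a - Suc k) = int k + 1" using k by simp
    have "hk0 Z d r \<le> int a - int (a - Suc k)" using e hk0_le by simp
    then obtain w where w: "w \<in> V (int k + 1)" "hball Z d r (int a, v) \<subseteq> hball Z d r (int k + 1, w)"
      using chain[OF lev(2) lev(1), of "a - Suc k"] unfolding e by blast
    obtain c U where "c \<in> C" "U \<in> \<U> k c" "hball Z d r (int k + 1, w) \<subseteq> U" using cond2[OF w(1)] by blast
    then show "k \<in> (\<Union>c\<in>C. N c)" using k w(2) unfolding N_def by auto
  qed
  have "a - b = card {b..<a}" by simp
  also have "\<dots> \<le> card (\<Union>c\<in>C. N c)"
  proof (rule card_mono[OF _ cov])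
    show "finite (\<Union>c\<in>C. N c)" using finC unfolding N_def by auto
  qed
  also have "\<dots> \<le> (\<Sum>c\<in>C. card (N c))" by (rule card_UN_le[OF finC])
  finally have s1: "a - b \<le> (\<Sum>c\<in>C. card (N c))" .
  have Cne: "C \<noteq> {}" using cardC by auto
  have "(\<Sum>c\<in>C. card C * card (N c)) < (\<Sum>c\<in>C. a - b)"
    by (rule sum_strict_mono[OF finC Cne lt])
  then have "card C * (\<Sum>c\<in>C. card (N c)) < card C * (a - b)" by (simp add: sum_distrib_left)
  moreover have "card C * (a - b) \<le> card C * (\<Sum>c\<in>C. card (N c))" using s1 by simp
  ultimately show False by simp
qed

lemma hdist_bound:
  assumes hi: "(int a, v) \<in> hverts Z d r V" and lo: "(int b, w) \<in> hverts Z d r V"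
    and ab: "b \<le> a" and dvw: "d v w < r ^ b"
  shows "hdist Z d r V (int a, v) (int b, w) \<le> a - b + 1 \<and> hdist Z d r V (int b, w) (int a, v) \<le> a - b + 1"
proof -
  have lev: "hk0 Z d r \<le> int a" "v \<in> V (int a)" using hi unfolding hverts_def by auto
  have levb: "hk0 Z d r \<le> int b" "w \<in> V (int b)" using lo unfolding hverts_def by auto
  have e: "int a - int (a - b) = int b" using ab by simp
  obtain w' where w': "w' \<in> V (int b)" "hball Z d r (int a, v) \<subseteq> hball Z d r (int b, w')"
    "gwalk (hedge Z d r V) (hverts Z d r V) (a - b) (int a, v) (int b, w')"
    "gwalk (hedge Z d r V) (hverts Z d r V) (a - b) (int b, w') (int a, v)"
    using chain[OF lev(2) lev(1), of "a - b"] levb(1) unfolding e by auto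
  show ?thesis
  proof (cases "w' = w")
    case True
    then show ?thesis using w' gdist_le unfolding hdist_def by fastforce
  next
    case False
    have vB: "v \<in> hball Z d r (int a, v)" using center_in_ball[OF lev] .
    have v1: "v \<in> hball Z d r (int b, w')" using vB w'(2) by blast
    have v2: "v \<in> hball Z d r (int b, w)" by (rule ball_lo[OF lo hv_Z[OF hi] dvw])
    have cl: "hball Z d r p \<subseteq> hcball Z d r p" for p
      unfolding hcball_def by (rule closure_of_subset) (use hball_sub in simp)
    have ne: "hcball Z d r (int b, w') \<inter> hcball Z d r (int b, w) \<noteq> {}"
      using v1 v2 cl by blast
    have vw': "(int b, w') \<in> hverts Z d r V" using levb(1) w'(1) unfolding hverts_def by simp
    have e1: "hedge Z d r V (int b, w') (int b, w)" unfolding hedge_def using vw' lo ne False by simp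
    have e2: "hedge Z d r V (int b, w) (int b, w')" unfolding hedge_def using vw' lo ne False by (simp add: Int_commute)
    have g1: "gwalk (hedge Z d r V) (hverts Z d r V) (Suc (a - b)) (int a, v) (int b, w)"
      by (rule gwalk_snoc[OF w'(3) e1 lo])
    have g2: "gwalk (hedge Z d r V) (hverts Z d r V) (Suc (a - b)) (int b, w) (int a, v)"
      by (rule gwalk_cons[OF e2 lo w'(4)])
    show ?thesis using gdist_le[OF g1] gdist_le[OF g2] unfolding hdist_def by simp
  qed
qed

lemma tdist_lower:
  assumes c: "c \<in> C" and x: "x \<in> tverts \<U> c" and y: "y \<in> tverts \<U> c"
    and cmp: "x = y \<or> tanc x y \<or> tanc y x"
  shows "\<bar>int (card (ancs \<U> c x)) - int (card (ancs \<U> c y))\<bar> \<le> int (tdist \<U> c x y)"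
proof -
  have "\<exists>n. gwalk (tedge \<U> c) (tverts \<U> c) n x y"
    using cmp tree_walk[OF c] x y gwalk_refl by metis
  then obtain n where "gwalk (tedge \<U> c) (tverts \<U> c) n x y" by blast
  then have g: "gwalk (tedge \<U> c) (tverts \<U> c) (tdist \<U> c x y) x y"
    unfolding tdist_def by (rule gdist_walk)
  show ?thesis by (rule gwalk_potential[OF tedge_depth[OF c] g])
qed

lemma core:
  assumes hi: "(int a, v) \<in> hverts Z d r V" and lo: "(int b, w) \<in> hverts Z d r V"
    and ab: "b \<le> a" and dvw: "d v w < r ^ b"
  shows "(\<forall>c\<in>C. fmap Z d r \<U> c (int a, v) = fmap Z d r \<U> c (int b, w)
     \<or> tanc (fmap Z d r \<U> c (int a, v)) (fmap Z d r \<U> c (int b, w))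
     \<or> tanc (fmap Z d r \<U> c (int b, w)) (fmap Z d r \<U> c (int a, v)))
    \<and> (\<exists>c\<in>C. real (hdist Z d r V (int a, v) (int b, w))
          \<le> real (card C) * real (tdist \<U> c (fmap Z d r \<U> c (int a, v)) (fmap Z d r \<U> c (int b, w)))
            + real (card C) + 1
        \<and> real (hdist Z d r V (int b, w) (int a, v))
          \<le> real (card C) * real (tdist \<U> c (fmap Z d r \<U> c (int b, w)) (fmap Z d r \<U> c (int a, v)))
            + real (card C) + 1)"
proof (intro conjI)
  show "\<forall>c\<in>C. fmap Z d r \<U> c (int a, v) = fmap Z d r \<U> c (int b, w)
     \<or> tanc (fmap Z d r \<U> c (int a, v)) (fmap Z d r \<U> c (int b, w))
     \<or> tanc (fmap Z d r \<U> c (int b, w)) (fmap Z d r \<U> c (int a, v))"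
    using comparable[OF _ hi lo ab dvw] by blast
  obtain c where c: "c \<in> C"
    and cC: "a - b \<le> card C * card {k. b \<le> k \<and> k < a \<and> (\<exists>U\<in>\<U> k c. hball Z d r (int a, v) \<subseteq> U)}"
    using exists_color[OF hi ab] by blast
  define N where "N = card {k. b \<le> k \<and> k < a \<and> (\<exists>U\<in>\<U> k c. hball Z d r (int a, v) \<subseteq> U)}"
  define x where "x = fmap Z d r \<U> c (int a, v)"
  define y where "y = fmap Z d r \<U> c (int b, w)"
  have db: "int N \<le> \<bar>int (card (ancs \<U> c x)) - int (card (ancs \<U> c y))\<bar> + 1"
    unfolding N_def x_def y_def by (rule depth_bound[OF c hi lo ab dvw])
  have xt: "x \<in> tverts \<U> c"
  proof -
    obtain i U where "x = (i, U)" "U \<in> \<U> i c" using fmap_char[OF c hi] unfolding x_def by metis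
    then show ?thesis unfolding tverts_def by simp
  qed
  have yt: "y \<in> tverts \<U> c"
  proof -
    obtain i U where "y = (i, U)" "U \<in> \<U> i c" using fmap_char[OF c lo] unfolding y_def by metis
    then show ?thesis unfolding tverts_def by simp
  qed
  have cxy: "x = y \<or> tanc x y \<or> tanc y x" unfolding x_def y_def by (rule comparable[OF c hi lo ab dvw])
  have t1: "\<bar>int (card (ancs \<U> c x)) - int (card (ancs \<U> c y))\<bar> \<le> int (tdist \<U> c x y)"
    by (rule tdist_lower[OF c xt yt cxy])
  have t2: "\<bar>int (card (ancs \<U> c y)) - int (card (ancs \<U> c x))\<bar> \<le> int (tdist \<U> c y x)"
    by (rule tdist_lower[OF c yt xt]) (use cxy in blast)
  have N1: "N \<le> tdist \<U> c x y + 1" using db t1 by linarith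
  have N2: "N \<le> tdist \<U> c y x + 1" using db t2 by linarith
  note hd = hdist_bound[OF hi lo ab dvw]
  have "a - b \<le> card C * N" using cC unfolding N_def .
  then have "real (a - b) \<le> real (card C * N)" by (simp only: of_nat_le_iff)
  then have cN: "real (a - b) \<le> real (card C) * real N" by simp
  have m1: "real (card C) * real N \<le> real (card C) * (real (tdist \<U> c x y) + 1)"
    using N1 by (intro mult_left_mono) auto
  have m2: "real (card C) * real N \<le> real (card C) * (real (tdist \<U> c y x) + 1)"
    using N2 by (intro mult_left_mono) auto
  have "hdist Z d r V (int a, v) (int b, w) \<le> a - b + 1" using hd by blast
  then have "real (hdist Z d r V (int a, v) (int b, w)) \<le> real (a - b + 1)" by (simp only: of_nat_le_iff)
  then have h1: "real (hdist Z d r V (int a, v) (int b, w)) \<le> real (a - b) + 1" by simp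
  have "hdist Z d r V (int b, w) (int a, v) \<le> a - b + 1" using hd by blast
  then have "real (hdist Z d r V (int b, w) (int a, v)) \<le> real (a - b + 1)" by (simp only: of_nat_le_iff)
  then have h2: "real (hdist Z d r V (int b, w) (int a, v)) \<le> real (a - b) + 1" by simp
  show "\<exists>c\<in>C. real (hdist Z d r V (int a, v) (int b, w))
          \<le> real (card C) * real (tdist \<U> c (fmap Z d r \<U> c (int a, v)) (fmap Z d r \<U> c (int b, w)))
            + real (card C) + 1
        \<and> real (hdist Z d r V (int b, w) (int a, v))
          \<le> real (card C) * real (tdist \<U> c (fmap Z d r \<U> c (int b, w)) (fmap Z d r \<U> c (int a, v)))
            + real (card C) + 1"
  proof (rule bexI[OF _ c], unfold x_def[symmetric] y_def[symmetric], intro conjI)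
    show "real (hdist Z d r V (int a, v) (int b, w)) \<le> real (card C) * real (tdist \<U> c x y) + real (card C) + 1"
      using h1 cN m1 by (simp add: algebra_simps)
    show "real (hdist Z d r V (int b, w) (int a, v)) \<le> real (card C) * real (tdist \<U> c y x) + real (card C) + 1"
      using h2 cN m2 by (simp add: algebra_simps)
  qed
qed

end

theorem mainTheorem16:
  fixes Z :: "'a set" and d :: "'a \<Rightarrow> 'a \<Rightarrow> real" and r :: real
    and V :: "int \<Rightarrow> 'a set" and n :: nat and C :: "'c set"
    and \<U> :: "nat \<Rightarrow> 'c \<Rightarrow> 'a set set" and p q :: "int \<times> 'a"
  assumes setting: "colored_setting Z d r V n C \<U>"
    and p: "p \<in> hverts Z d r V" and q: "q \<in> hverts Z d r V"
    and hc: "horiz_close d r p q"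
  shows "(\<forall>c\<in>C. fmap Z d r \<U> c p = fmap Z d r \<U> c q
                \<or> tanc (fmap Z d r \<U> c p) (fmap Z d r \<U> c q)
                \<or> tanc (fmap Z d r \<U> c q) (fmap Z d r \<U> c p))
       \<and> (\<exists>c\<in>C. real (hdist Z d r V p q)
                 \<le> real (card C) * real (tdist \<U> c (fmap Z d r \<U> c p) (fmap Z d r \<U> c q))
                   + real (card C) + 1)"
proof -
  interpret CS Z d r V n C \<U> using setting by (rule CS.intro)
  obtain jp v where pe: "p = (jp, v)" by (cases p)
  obtain jq w where qe: "q = (jq, w)" by (cases q)
  have h0: "0 \<le> min jp jq" and hd: "d v w < r powi (min jp jq)"
    using hc unfolding horiz_close_def pe qe by auto
  define a where "a = nat jp"
  define b where "b = nat jq"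
  have ja: "jp = int a" and jb: "jq = int b" using h0 unfolding a_def b_def by auto
  have pa: "(int a, v) \<in> hverts Z d r V" using p pe ja by simp
  have qb: "(int b, w) \<in> hverts Z d r V" using q qe jb by simp
  show ?thesis
  proof (cases "b \<le> a")
    case True
    have "min jp jq = int b" using True ja jb by simp
    then have dvw: "d v w < r ^ b" using hd by (simp add: power_int_of_nat)
    note cr = core[OF pa qb True dvw]
    show ?thesis unfolding pe qe ja jb using cr by blast
  next
    case False
    then have ab: "a \<le> b" by simp
    have "min jp jq = int a" using ab ja jb by simp
    then have "d v w < r ^ a" using hd by (simp add: power_int_of_nat)
    then have dwv: "d w v < r ^ a" using Metric_space.commute[OF ms] by metis
    note cr = core[OF qb pa ab dwv]
    have A: "\<forall>c\<in>C. fmap Z d r \<U> c (int a, v) = fmap Z d r \<U> c (int b, w)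
                \<or> tanc (fmap Z d r \<U> c (int a, v)) (fmap Z d r \<U> c (int b, w))
                \<or> tanc (fmap Z d r \<U> c (int b, w)) (fmap Z d r \<U> c (int a, v))"
    proof
      fix c assume "c \<in> C"
      then have "fmap Z d r \<U> c (int b, w) = fmap Z d r \<U> c (int a, v)
                \<or> tanc (fmap Z d r \<U> c (int b, w)) (fmap Z d r \<U> c (int a, v))
                \<or> tanc (fmap Z d r \<U> c (int a, v)) (fmap Z d r \<U> c (int b, w))"
        using cr by blast
      then show "fmap Z d r \<U> c (int a, v) = fmap Z d r \<U> c (int b, w)
                \<or> tanc (fmap Z d r \<U> c (int a, v)) (fmap Z d r \<U> c (int b, w))
                \<or> tanc (fmap Z d r \<U> c (int b, w)) (fmap Z d r \<U> c (int a, v))" by auto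
    qed
    have B: "\<exists>c\<in>C. real (hdist Z d r V (int a, v) (int b, w))
                 \<le> real (card C) * real (tdist \<U> c (fmap Z d r \<U> c (int a, v)) (fmap Z d r \<U> c (int b, w)))
                   + real (card C) + 1"
      using cr by blast
    show ?thesis unfolding pe qe ja jb using A B by blast
  qed
qed

end
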